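(* Consider the nearest-neighbor graph $\mathcal{G}^\mu_{x(k)}$ for a positive integer $\mu$, and algorithms in $\mathcal{A}^*_{\rm ave}$. (i) If $n\le\mu+1$, every algorithm in $\mathcal{A}^*_{\rm ave}$ achieves global finite-time consensus. (ii) If $n>\mu+1$, every algorithm in $\mathcal{A}^*_{\rm ave}$ fails to achieve finite-time consensus for Lebesgue-almost every initial value $x^0\in\mathbb{R}^n$. (iii) If $n>\mu+1$ and the sequence $\{\alpha_k\}$ is monotone (non-decreasing or non-increasing), the algorithm achieves global asymptotic consensus.
   Context: Nodes $\mathcal{V}=\{1,\dots,n\}$, $n\ge3$, states $x_i(k)\in\mathbb{R}$, discrete time. The class $\mathcal{A}^*_{\rm ave}$ consists of the updates $$x_i(k+1)=\alpha_k\min_{j\in\mathcal{N}_i(k)}x_j(k)+(1-\alpha_k)\max_{j\in\mathcal{N}_i(k)}x_j(k)$$ with node-independent parameters $\alpha_k\in(0,1)$ for all $k$; here $\mathcal{N}_i(k)=\{i\}\cup\mathcal{N}_i^-(k)\cup\mathcal{N}_i^+(k)$. Nearest-neighbor graph $\mathcal{G}^\mu_{x(k)}$: $\mathcal{N}_i^-(k)$ is a set of $\min(\mu,|\{j:x_j(k)<x_i(k)\}|)$ nodes $j$ with $x_j(k)<x_i(k)$ whose values are closest to $x_i(k)$ among such nodes (ties broken arbitrarily), and $\mathcal{N}_i^+(k)$ is defined symmetrically from $\{j: x_j(k)>x_i(k)\}$. The iteration starts at time $k_0\ge0$ with $x(k_0)=x^0$. Finite-time consensus for $x^0$: there exist $z_*$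 and an integer $T_*$ with $x_i(T_* )=z_*$ for all $i$; asymptotic consensus: there is $z_*$ with $x_i(k)\to z_*$ for all $i$; "global" means for all $k_0$ and all $x^0\in\mathbb{R}^n$. *)

theory Defs
  imports "HOL-Analysis.Analysis"
begin

text \<open>Nodes are the elements of a finite type 'n (so n = CARD('n)); a state is x :: real^'n.\<close>

definition lower_set :: "real^'n \<Rightarrow> 'n \<Rightarrow> 'n set" where
  "lower_set x i = {j. x$j < x$i}"

definition upper_set :: "real^'n \<Rightarrow> 'n \<Rightarrow> 'n set" where
  "upper_set x i = {j. x$j > x$i}"

definition valid_lower :: "nat \<Rightarrow> real^'n \<Rightarrow> 'n \<Rightarrow> 'n set \<Rightarrow> bool" where
  "valid_lower mu x i S \<longleftrightarrow> S \<subseteq> lower_set x i \<and>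
     card S = min mu (card (lower_set x i)) \<and>
     (\<forall>j\<in>S. \<forall>l\<in>lower_set x i - S. x$i - x$j \<le> x$i - x$l)"

definition valid_upper :: "nat \<Rightarrow> real^'n \<Rightarrow> 'n \<Rightarrow> 'n set \<Rightarrow> bool" where
  "valid_upper mu x i S \<longleftrightarrow> S \<subseteq> upper_set x i \<and>
     card S = min mu (card (upper_set x i)) \<and>
     (\<forall>j\<in>S. \<forall>l\<in>upper_set x i - S. x$j - x$i \<le> x$l - x$i)"

definition valid_tiebreak :: "nat \<Rightarrow> (nat \<Rightarrow> real^'n \<Rightarrow> 'n \<Rightarrow> 'n set \<times> 'n set) \<Rightarrow> bool" where
  "valid_tiebreak mu tb \<longleftrightarrow> (\<forall>k x i. valid_lower mu x i (fst (tb k x i)) \<and> valid_upper mu x i (snd (tb k x i)))"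

definition nbhd :: "(nat \<Rightarrow> real^'n \<Rightarrow> 'n \<Rightarrow> 'n set \<times> 'n set) \<Rightarrow> nat \<Rightarrow> real^'n \<Rightarrow> 'n \<Rightarrow> 'n set" where
  "nbhd tb k x i = {i} \<union> fst (tb k x i) \<union> snd (tb k x i)"

definition step :: "(nat \<Rightarrow> real) \<Rightarrow> (nat \<Rightarrow> real^'n \<Rightarrow> 'n \<Rightarrow> 'n set \<times> 'n set) \<Rightarrow> nat \<Rightarrow> real^'n \<Rightarrow> real^'n" where
  "step \<alpha> tb k x = (\<chi> i. \<alpha> k * Min ((\<lambda>j. x$j) ` nbhd tb k x i)
                        + (1 - \<alpha> k) * Max ((\<lambda>j. x$j) ` nbhd tb k x i))"

text \<open>traj \<alpha> tb k0 x0 m is the state x(k0 + m) of the iteration started at time k0 with x(k0) = x0.\<close>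
primrec traj :: "(nat \<Rightarrow> real) \<Rightarrow> (nat \<Rightarrow> real^'n \<Rightarrow> 'n \<Rightarrow> 'n set \<times> 'n set) \<Rightarrow> nat \<Rightarrow> real^'n \<Rightarrow> nat \<Rightarrow> real^'n" where
  "traj \<alpha> tb k0 x0 0 = x0"
| "traj \<alpha> tb k0 x0 (Suc m) = step \<alpha> tb (k0 + m) (traj \<alpha> tb k0 x0 m)"

definition finite_time_consensus :: "(nat \<Rightarrow> real) \<Rightarrow> (nat \<Rightarrow> real^'n \<Rightarrow> 'n \<Rightarrow> 'n set \<times> 'n set) \<Rightarrow> nat \<Rightarrow> real^'n \<Rightarrow> bool" where
  "finite_time_consensus \<alpha> tb k0 x0 \<longleftrightarrow> (\<exists>m z. \<forall>i. traj \<alpha> tb k0 x0 m $ i = z)"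

definition asymptotic_consensus :: "(nat \<Rightarrow> real) \<Rightarrow> (nat \<Rightarrow> real^'n \<Rightarrow> 'n \<Rightarrow> 'n set \<times> 'n set) \<Rightarrow> nat \<Rightarrow> real^'n \<Rightarrow> bool" where
  "asymptotic_consensus \<alpha> tb k0 x0 \<longleftrightarrow> (\<exists>z. \<forall>i. (\<lambda>m. traj \<alpha> tb k0 x0 m $ i) \<longlonglongrightarrow> z)"

end

theory Submission
  imports Defs
begin



definition mnv :: "(nat \<Rightarrow> real^'n \<Rightarrow> 'n \<Rightarrow> 'n set \<times> 'n set) \<Rightarrow> nat \<Rightarrow> real^'n \<Rightarrow> 'n \<Rightarrow> real" where
  "mnv tb k x i = Min ((\<lambda>j. x$j) ` nbhd tb k x i)"
definition mxv :: "(nat \<Rightarrow> real^'n \<Rightarrow> 'n \<Rightarrow> 'n set \<times> 'n set) \<Rightarrow> nat \<Rightarrow> real^'n \<Rightarrow> 'n \<Rightarrow> real" where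
  "mxv tb k x i = Max ((\<lambda>j. x$j) ` nbhd tb k x i)"
definition lo :: "real^'n \<Rightarrow> real" where "lo x = Min (range (\<lambda>i. x$i))"
definition hi :: "real^'n \<Rightarrow> real" where "hi x = Max (range (\<lambda>i. x$i))"

lemma step_nth: "step \<alpha> tb k x $ i = \<alpha> k * mnv tb k x i + (1 - \<alpha> k) * mxv tb k x i"
  by (simp add: step_def mnv_def mxv_def)

lemma nbhd_fin: "finite (nbhd tb k x i)" by simp
lemma nbhd_self: "i \<in> nbhd tb k x i" by (simp add: nbhd_def)
lemma fst_nbhd: "j \<in> fst (tb k x i) \<Longrightarrow> j \<in> nbhd tb k x i" by (simp add: nbhd_def)
lemma snd_nbhd: "j \<in> snd (tb k x i) \<Longrightarrow> j \<in> nbhd tb k x i" by (simp add: nbhd_def)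

lemma mnv_le: "j \<in> nbhd tb k x i \<Longrightarrow> mnv tb k x i \<le> x$j"
  unfolding mnv_def by (rule Min_le) auto
lemma mxv_ge: "j \<in> nbhd tb k x i \<Longrightarrow> x$j \<le> mxv tb k x i"
  unfolding mxv_def by (rule Max_ge) auto
lemma mnv_in: "\<exists>j\<in>nbhd tb k x i. mnv tb k x i = x$j"
proof -
  have "Min ((\<lambda>j. x$j) ` nbhd tb k x i) \<in> (\<lambda>j. x$j) ` nbhd tb k x i"
    by (rule Min_in) (auto simp: nbhd_def)
  then show ?thesis unfolding mnv_def by auto
qed
lemma mxv_in: "\<exists>j\<in>nbhd tb k x i. mxv tb k x i = x$j"
proof -
  have "Max ((\<lambda>j. x$j) ` nbhd tb k x i) \<in> (\<lambda>j. x$j) ` nbhd tb k x i"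
    by (rule Max_in) (auto simp: nbhd_def)
  then show ?thesis unfolding mxv_def by auto
qed
lemma lo_le: "lo x \<le> x$j" unfolding lo_def by (rule Min_le) auto
lemma hi_ge: "x$j \<le> hi x" unfolding hi_def by (rule Max_ge) auto
lemma lo_in: "\<exists>j. lo x = x$j"
proof -
  have "Min (range (\<lambda>i. x$i)) \<in> range (\<lambda>i. x$i)" by (rule Min_in) auto
  then show ?thesis unfolding lo_def by blast
qed
lemma hi_in: "\<exists>j. hi x = x$j"
proof -
  have "Max (range (\<lambda>i. x$i)) \<in> range (\<lambda>i. x$i)" by (rule Max_in) auto
  then show ?thesis unfolding hi_def by blast
qed
lemma lo_mnv: "lo x \<le> mnv tb k x i" using mnv_in[of tb k x i] lo_le by metis
lemma mxv_hi: "mxv tb k x i \<le> hi x" using mxv_in[of tb k x i] hi_ge by metis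
lemma mnv_self: "mnv tb k x i \<le> x$i" by (rule mnv_le[OF nbhd_self])
lemma mxv_self: "x$i \<le> mxv tb k x i" by (rule mxv_ge[OF nbhd_self])

context
  fixes mu tb assumes tb: "valid_tiebreak mu tb"
begin

lemma fst_sub: "fst (tb k x i) \<subseteq> lower_set x i"
  using tb by (simp add: valid_tiebreak_def valid_lower_def)
lemma snd_sub: "snd (tb k x i) \<subseteq> upper_set x i"
  using tb by (simp add: valid_tiebreak_def valid_upper_def)
lemma card_fst: "card (fst (tb k x i)) = min mu (card (lower_set x i))"
  using tb by (simp add: valid_tiebreak_def valid_lower_def)
lemma card_snd: "card (snd (tb k x i)) = min mu (card (upper_set x i))"
  using tb by (simp add: valid_tiebreak_def valid_upper_def)
lemma close_fst: "j \<in> fst (tb k x i) \<Longrightarrow> l \<in> lower_set x i \<Longrightarrow> l \<notin> fst (tb k x i) \<Longrightarrow> x$l \<le> x$j"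
proof -
  assume a: "j \<in> fst (tb k x i)" "l \<in> lower_set x i" "l \<notin> fst (tb k x i)"
  have "x$i - x$j \<le> x$i - x$l" using tb a unfolding valid_tiebreak_def valid_lower_def by blast
  then show ?thesis by simp
qed
lemma close_snd: "j \<in> snd (tb k x i) \<Longrightarrow> l \<in> upper_set x i \<Longrightarrow> l \<notin> snd (tb k x i) \<Longrightarrow> x$j \<le> x$l"
proof -
  assume a: "j \<in> snd (tb k x i)" "l \<in> upper_set x i" "l \<notin> snd (tb k x i)"
  have "x$j - x$i \<le> x$l - x$i" using tb a unfolding valid_tiebreak_def valid_upper_def by blast
  then show ?thesis by simp
qed
lemma fst_lt: "j \<in> fst (tb k x i) \<Longrightarrow> x$j < x$i" using fst_sub by (auto simp: lower_set_def)
lemma snd_gt: "j \<in> snd (tb k x i) \<Longrightarrow> x$j > x$i" using snd_sub by (auto simp: upper_set_def)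

lemma snd_ne: assumes "mu \<ge> 1" "upper_set x i \<noteq> {}" shows "snd (tb k x i) \<noteq> {}"
proof -
  have "card (upper_set x i) \<ge> 1" using assms(2) by (simp add: Suc_le_eq card_gt_0_iff)
  then have "card (snd (tb k x i)) \<ge> 1" using assms(1) card_snd by simp
  then show ?thesis by auto
qed
lemma fst_ne: assumes "mu \<ge> 1" "lower_set x i \<noteq> {}" shows "fst (tb k x i) \<noteq> {}"
proof -
  have "card (lower_set x i) \<ge> 1" using assms(2) by (simp add: Suc_le_eq card_gt_0_iff)
  then have "card (fst (tb k x i)) \<ge> 1" using assms(1) card_fst by simp
  then show ?thesis by auto
qed

end



lemma abstract_conv:
  fixes L H :: "nat \<Rightarrow> real" and f :: "'i \<Rightarrow> nat \<Rightarrow> real"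
  assumes Linc: "\<And>m. L m \<le> L (Suc m)" and Hdec: "\<And>m. H (Suc m) \<le> H m"
    and LH: "\<And>m. L m \<le> H m"
    and r: "0 \<le> r" "r < 1" and N: "N > 0"
    and contr: "\<And>p. H (p+N) - L (p+N) \<le> r * (H p - L p)"
    and f: "\<And>i m. L m \<le> f i m \<and> f i m \<le> H m"
  shows "\<exists>z. \<forall>i. f i \<longlonglongrightarrow> z"
proof -
  have incL: "incseq L" using Linc by (simp add: incseq_SucI)
  have decH: "decseq H" using Hdec by (simp add: decseq_SucI)
  have Lb: "\<forall>i. L i \<le> H 0"
  proof
    fix i have "H i \<le> H 0" using decH by (simp add: decseq_def)
    then show "L i \<le> H 0" using LH[of i] by linarith
  qed
  obtain z where z: "L \<longlonglongrightarrow> z" using incseq_convergent[OF incL Lb] by blast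
  define D where "D m = H m - L m" for m
  have Ddec: "D m' \<le> D m" if "m \<le> m'" for m m'
  proof -
    have "L m \<le> L m'" "H m' \<le> H m" using incL decH that unfolding incseq_def decseq_def by auto
    then show ?thesis unfolding D_def by linarith
  qed
  have Dnn: "0 \<le> D m" for m using LH[of m] by (simp add: D_def)
  have Dj: "D (j*N) \<le> r^j * D 0" for j
  proof (induction j)
    case 0 then show ?case by simp
  next
    case (Suc j)
    have "D (Suc j * N) = D (j*N + N)" by (simp add: add.commute)
    also have "\<dots> \<le> r * D (j*N)" using contr[of "j*N"] by (simp add: D_def)
    also have "\<dots> \<le> r * (r^j * D 0)" using Suc r by (simp add: mult_left_mono)
    finally show ?case by simp
  qed
  have D0: "D \<longlonglongrightarrow> 0"
  proof (rule LIMSEQ_I)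
    fix e :: real assume e: "0 < e"
    have "(\<lambda>j. r^j) \<longlonglongrightarrow> 0" using r by (intro LIMSEQ_power_zero) simp
    then have "(\<lambda>j. r^j * D 0) \<longlonglongrightarrow> 0" by (rule tendsto_mult_left_zero)
    then obtain j where j: "\<forall>n\<ge>j. norm (r^n * D 0 - 0) < e"
      using LIMSEQ_D[OF _ e] by fastforce
    have "\<forall>n\<ge>j*N. norm (D n - 0) < e"
    proof (intro allI impI)
      fix n assume "j*N \<le> n"
      then have "D n \<le> D (j*N)" by (rule Ddec)
      also have "\<dots> \<le> r^j * D 0" by (rule Dj)
      also have "\<dots> < e" using j by (metis diff_zero order_refl real_norm_def abs_le_iff order.strict_trans1)
      finally show "norm (D n - 0) < e" using Dnn[of n] by simp
    qed
    then show "\<exists>no. \<forall>n\<ge>no. norm (D n - 0) < e" by blast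
  qed
  have Hz: "H \<longlonglongrightarrow> z"
  proof -
    have "(\<lambda>m. L m + D m) \<longlonglongrightarrow> z + 0" by (intro tendsto_add z D0)
    then show ?thesis by (simp add: D_def)
  qed
  have "\<forall>i. f i \<longlonglongrightarrow> z"
  proof
    fix i show "f i \<longlonglongrightarrow> z"
    proof (rule real_tendsto_sandwich[OF _ _ z Hz])
      show "\<forall>\<^sub>F n in sequentially. L n \<le> f i n" using f by (intro always_eventually) blast
      show "\<forall>\<^sub>F n in sequentially. f i n \<le> H n" using f by (intro always_eventually) blast
    qed
  qed
  then show ?thesis by blast
qed

lemma conv_le: "0 \<le> (t::real) \<Longrightarrow> t \<le> 1 \<Longrightarrow> p \<le> p' \<Longrightarrow> q \<le> q' \<Longrightarrow> t*p + (1-t)*q \<le> t*p' + (1-t)*q'"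
  by (simp add: add_mono mult_left_mono)

lemma step_lo: assumes "0 < \<alpha> k" "\<alpha> k < 1" shows "lo x \<le> step \<alpha> tb k x $ i"
proof -
  have "lo x = \<alpha> k * lo x + (1 - \<alpha> k) * lo x" by (simp add: algebra_simps)
  also have "\<dots> \<le> \<alpha> k * mnv tb k x i + (1 - \<alpha> k) * mxv tb k x i"
    using assms lo_mnv[of x tb k i] mnv_self[of tb k x i] mxv_self[of x i tb k]
    by (intro conv_le) auto
  finally show ?thesis by (simp add: step_nth)
qed
lemma step_hi: assumes "0 < \<alpha> k" "\<alpha> k < 1" shows "step \<alpha> tb k x $ i \<le> hi x"
proof -
  have "\<alpha> k * mnv tb k x i + (1 - \<alpha> k) * mxv tb k x i \<le> \<alpha> k * hi x + (1 - \<alpha> k) * hi x"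
    using assms mxv_hi[of tb k x i] mnv_self[of tb k x i] mxv_self[of x i tb k]
    by (intro conv_le) auto
  also have "\<dots> = hi x" by (simp add: algebra_simps)
  finally show ?thesis by (simp add: step_nth)
qed
lemma lo_step: assumes "0 < \<alpha> k" "\<alpha> k < 1" shows "lo x \<le> lo (step \<alpha> tb k x)"
  using lo_in[of "step \<alpha> tb k x"] step_lo[of \<alpha> k, OF assms] by metis
lemma hi_step: assumes "0 < \<alpha> k" "\<alpha> k < 1" shows "hi (step \<alpha> tb k x) \<le> hi x"
  using hi_in[of "step \<alpha> tb k x"] step_hi[of \<alpha> k, OF assms] by metis




context
  fixes mu :: nat and tb :: "nat \<Rightarrow> real^'n \<Rightarrow> 'n \<Rightarrow> 'n set \<times> 'n set"
  assumes tb: "valid_tiebreak mu tb" and mu1: "mu \<ge> 1"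
begin

lemma step_up:
  fixes x :: "real^'n"
  assumes al: "0 < \<alpha> k" "\<alpha> k < 1" and c: "0 \<le> c" "c \<le> 1 - \<alpha> k"
    and a: "a \<le> lo x" "a \<le> y" and ne: "{i. y \<le> x$i} \<noteq> {}"
  shows "min CARD('n) (card {i. y \<le> x$i} + 1) \<le> card {i. a + c*(y-a) \<le> step \<alpha> tb k x $ i}"
proof -
  define S where "S = {i. y \<le> x$i}"
  define S' where "S' = {i. a + c*(y-a) \<le> step \<alpha> tb k x $ i}"
  have key: "a + c*(y-a) \<le> step \<alpha> tb k x $ i" if "y \<le> mxv tb k x i" for i
  proof -
    have "a + c*(y-a) \<le> a + (1 - \<alpha> k)*(y-a)" using c a by (intro add_left_mono mult_right_mono) auto
    also have "\<dots> = \<alpha> k * a + (1 - \<alpha> k) * y" by (simp add: algebra_simps)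
    also have "\<dots> \<le> \<alpha> k * mnv tb k x i + (1 - \<alpha> k) * mxv tb k x i"
      using al a that lo_mnv[of x tb k i] by (intro conv_le) auto
    finally show ?thesis by (simp add: step_nth)
  qed
  have sub: "S \<subseteq> S'"
  proof
    fix i assume "i \<in> S"
    then have "y \<le> mxv tb k x i" using mxv_self[of x i tb k] by (auto simp: S_def)
    then show "i \<in> S'" using key by (simp add: S'_def)
  qed
  show ?thesis
  proof (cases "S = UNIV")
    case True
    then have "S' = UNIV" using sub by auto
    then show ?thesis by (simp add: S'_def)
  next
    case False
    have fin: "finite (-S)" by simp
    have "(-S) \<noteq> {}" using False by auto
    then have "Max ((\<lambda>j. x$j) ` (-S)) \<in> (\<lambda>j. x$j) ` (-S)" by (intro Max_in) auto
    then obtain i0 where i0: "i0 \<notin> S" "x$i0 = Max ((\<lambda>j. x$j) ` (-S))" by auto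
    have maxi: "x$j \<le> x$i0" if "j \<notin> S" for j using i0 that by (auto intro: Max_ge)
    obtain j where j: "j \<in> S" using ne S_def by auto
    have "x$i0 < y" using i0 by (simp add: S_def)
    then have "j \<in> upper_set x i0" using j by (auto simp: S_def upper_set_def)
    then have "snd (tb k x i0) \<noteq> {}" using snd_ne[OF tb mu1] by blast
    then obtain s where s: "s \<in> snd (tb k x i0)" by auto
    have "x$s > x$i0" using snd_gt[OF tb s] .
    then have "s \<in> S" using maxi by force
    then have "y \<le> mxv tb k x i0" using mxv_ge[OF snd_nbhd[of s tb k x i0, OF s]] by (auto simp: S_def)
    then have "i0 \<in> S'" using key by (simp add: S'_def)
    then have "insert i0 S \<subseteq> S'" using sub by auto
    then have "card (insert i0 S) \<le> card S'" by (intro card_mono) auto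
    then show ?thesis using i0 by (simp add: S_def S'_def)
  qed
qed

lemma step_down:
  fixes x :: "real^'n"
  assumes al: "0 < \<alpha> k" "\<alpha> k < 1" and c: "0 \<le> c" "c \<le> \<alpha> k"
    and b: "hi x \<le> b" "y \<le> b" and ne: "{i. x$i \<le> y} \<noteq> {}"
  shows "min CARD('n) (card {i. x$i \<le> y} + 1) \<le> card {i. step \<alpha> tb k x $ i \<le> b - c*(b-y)}"
proof -
  define S where "S = {i. x$i \<le> y}"
  define S' where "S' = {i. step \<alpha> tb k x $ i \<le> b - c*(b-y)}"
  have key: "step \<alpha> tb k x $ i \<le> b - c*(b-y)" if "mnv tb k x i \<le> y" for i
  proof -
    have "\<alpha> k * mnv tb k x i + (1 - \<alpha> k) * mxv tb k x i \<le> \<alpha> k * y + (1 - \<alpha> k) * b"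
      using al b that mxv_hi[of tb k x i] by (intro conv_le) auto
    also have "\<dots> = b - \<alpha> k * (b - y)" by (simp add: algebra_simps)
    also have "\<dots> \<le> b - c * (b - y)" using c b by (intro diff_left_mono mult_right_mono) auto
    finally show ?thesis by (simp add: step_nth)
  qed
  have sub: "S \<subseteq> S'"
  proof
    fix i assume "i \<in> S"
    then have "mnv tb k x i \<le> y" using mnv_self[of tb k x i] by (auto simp: S_def)
    then show "i \<in> S'" using key by (simp add: S'_def)
  qed
  show ?thesis
  proof (cases "S = UNIV")
    case True
    then have "S' = UNIV" using sub by auto
    then show ?thesis by (simp add: S'_def)
  next
    case False
    have "(-S) \<noteq> {}" using False by auto
    then have "Min ((\<lambda>j. x$j) ` (-S)) \<in> (\<lambda>j. x$j) ` (-S)" by (intro Min_in) auto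
    then obtain i0 where i0: "i0 \<notin> S" "x$i0 = Min ((\<lambda>j. x$j) ` (-S))" by auto
    have mini: "x$i0 \<le> x$j" if "j \<notin> S" for j using i0 that by (auto intro: Min_le)
    obtain j where j: "j \<in> S" using ne S_def by auto
    have "y < x$i0" using i0 by (simp add: S_def)
    then have "j \<in> lower_set x i0" using j by (auto simp: S_def lower_set_def)
    then have "fst (tb k x i0) \<noteq> {}" using fst_ne[OF tb mu1] by blast
    then obtain s where s: "s \<in> fst (tb k x i0)" by auto
    have "x$s < x$i0" using fst_lt[OF tb s] .
    then have "s \<in> S" using mini by force
    then have "mnv tb k x i0 \<le> y" using mnv_le[OF fst_nbhd[of s tb k x i0, OF s]] by (auto simp: S_def)
    then have "i0 \<in> S'" using key by (simp add: S'_def)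
    then have "insert i0 S \<subseteq> S'" using sub by auto
    then have "card (insert i0 S) \<le> card S'" by (intro card_mono) auto
    then show ?thesis using i0 by (simp add: S_def S'_def)
  qed
qed

end



lemma lo_traj_mono:
  assumes al: "\<And>t. 0 < \<alpha> t \<and> \<alpha> t < 1" and "m \<le> m'"
  shows "lo (traj \<alpha> tb k0 x0 m) \<le> lo (traj \<alpha> tb k0 x0 m')"
proof (rule lift_Suc_mono_le[OF _ assms(2)])
  fix n show "lo (traj \<alpha> tb k0 x0 n) \<le> lo (traj \<alpha> tb k0 x0 (Suc n))"
    using lo_step[of \<alpha> "k0+n"] al by simp
qed
lemma hi_traj_mono:
  assumes al: "\<And>t. 0 < \<alpha> t \<and> \<alpha> t < 1" and "m \<le> m'"
  shows "hi (traj \<alpha> tb k0 x0 m') \<le> hi (traj \<alpha> tb k0 x0 m)"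
proof (rule lift_Suc_antimono_le[OF _ assms(2)])
  fix n show "hi (traj \<alpha> tb k0 x0 (Suc n)) \<le> hi (traj \<alpha> tb k0 x0 n)"
    using hi_step[of \<alpha> "k0+n"] al by simp
qed

lemma min_step: "min (N::nat) (s+1) \<le> A \<Longrightarrow> min N (Suc s + 1) \<le> min N (A+1)"
  by (simp add: min_def split: if_splits)

lemma min_pos: "0 < (N::nat) \<Longrightarrow> 0 < min N (Suc s)" by simp

lemma lo_hi: "lo x \<le> hi x" using lo_le[of x] hi_ge[of x] by (meson order_trans)

lemma card_full: fixes A :: "'n::finite set" assumes "CARD('n) \<le> card A" shows "A = UNIV"
proof -
  have "card A \<le> card (UNIV :: 'n set)" by (rule card_mono) auto
  then have "card A = card (UNIV :: 'n set)" using assms by simp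
  then show ?thesis by (intro card_subset_eq) auto
qed

context
  fixes mu :: nat and tb :: "nat \<Rightarrow> real^'n \<Rightarrow> 'n \<Rightarrow> 'n set \<times> 'n set"
  assumes tb: "valid_tiebreak mu tb" and mu1: "mu \<ge> 1"
begin

lemma contract_up:
  assumes al: "\<And>t. 0 < \<alpha> t \<and> \<alpha> t < 1" and c: "0 \<le> c" "\<And>t. c \<le> 1 - \<alpha> t"
  shows "hi (traj \<alpha> tb k0 x0 (p + CARD('n))) - lo (traj \<alpha> tb k0 x0 (p + CARD('n)))
         \<le> (1 - c ^ CARD('n)) * (hi (traj \<alpha> tb k0 x0 p) - lo (traj \<alpha> tb k0 x0 p))"
proof -
  define X where "X s = traj \<alpha> tb k0 x0 (p + s)" for s
  define a where "a = lo (X 0)"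
  define b where "b = hi (X 0)"
  have ab: "a \<le> b" using lo_hi by (simp add: a_def b_def)
  have N0: "CARD('n) > 0" by simp
  have claim: "min CARD('n) (s+1) \<le> card {i. a + c^s*(b-a) \<le> X s $ i}" for s
  proof (induction s)
    case 0
    obtain j where j: "hi (X 0) = X 0 $ j" using hi_in by blast
    have "{j} \<subseteq> {i. a + c^0*(b-a) \<le> X 0 $ i}" using j by (simp add: b_def)
    then have "1 \<le> card {i. a + c^0*(b-a) \<le> X 0 $ i}"
      using card_mono[of "{i. a + c^0*(b-a) \<le> X 0 $ i}" "{j}"] by simp
    then show ?case by simp
  next
    case (Suc s)
    define y where "y = a + c^s*(b-a)"
    have XS: "X (Suc s) = step \<alpha> tb (k0 + (p+s)) (X s)" by (simp add: X_def)
    have alo: "a \<le> lo (X s)" unfolding a_def X_def by (rule lo_traj_mono[OF al]) simp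
    have ay: "a \<le> y" using ab c by (simp add: y_def)
    have ne: "{i. y \<le> X s $ i} \<noteq> {}"
    proof
      assume "{i. y \<le> X s $ i} = {}"
      then show False using Suc.IH min_pos[OF N0, of s] by (simp add: y_def)
    qed
    have "min CARD('n) (card {i. y \<le> X s $ i} + 1) \<le> card {i. a + c*(y-a) \<le> X (Suc s) $ i}"
      unfolding XS using step_up[OF tb mu1, of \<alpha> "k0+(p+s)" c a "X s" y] al c alo ay ne by auto
    moreover have "a + c*(y-a) = a + c^(Suc s)*(b-a)" by (simp add: y_def)
    ultimately show ?case using order_trans[OF min_step[OF Suc.IH[folded y_def]]] by simp
  qed
  have all: "{i. a + c^CARD('n)*(b-a) \<le> X CARD('n) $ i} = UNIV"
    by (rule card_full) (use claim[of "CARD('n)"] in simp)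
  obtain j where j: "lo (X CARD('n)) = X CARD('n) $ j" using lo_in by blast
  have lo': "a + c^CARD('n)*(b-a) \<le> lo (X CARD('n))" using all j by (metis UNIV_I mem_Collect_eq)
  have hi': "hi (X CARD('n)) \<le> b" unfolding b_def X_def by (rule hi_traj_mono[OF al]) simp
  have "hi (X CARD('n)) - lo (X CARD('n)) \<le> (1 - c^CARD('n)) * (b - a)"
    using lo' hi' by (simp add: algebra_simps)
  then show ?thesis by (simp add: X_def a_def b_def)
qed

lemma contract_down:
  assumes al: "\<And>t. 0 < \<alpha> t \<and> \<alpha> t < 1" and c: "0 \<le> c" "\<And>t. c \<le> \<alpha> t"
  shows "hi (traj \<alpha> tb k0 x0 (p + CARD('n))) - lo (traj \<alpha> tb k0 x0 (p + CARD('n)))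
         \<le> (1 - c ^ CARD('n)) * (hi (traj \<alpha> tb k0 x0 p) - lo (traj \<alpha> tb k0 x0 p))"
proof -
  define X where "X s = traj \<alpha> tb k0 x0 (p + s)" for s
  define a where "a = lo (X 0)"
  define b where "b = hi (X 0)"
  have ab: "a \<le> b" using lo_hi by (simp add: a_def b_def)
  have N0: "CARD('n) > 0" by simp
  have claim: "min CARD('n) (s+1) \<le> card {i. X s $ i \<le> b - c^s*(b-a)}" for s
  proof (induction s)
    case 0
    obtain j where j: "lo (X 0) = X 0 $ j" using lo_in by blast
    have "{j} \<subseteq> {i. X 0 $ i \<le> b - c^0*(b-a)}" using j by (simp add: a_def)
    then have "1 \<le> card {i. X 0 $ i \<le> b - c^0*(b-a)}"
      using card_mono[of "{i. X 0 $ i \<le> b - c^0*(b-a)}" "{j}"] by simp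
    then show ?case by simp
  next
    case (Suc s)
    define y where "y = b - c^s*(b-a)"
    have XS: "X (Suc s) = step \<alpha> tb (k0 + (p+s)) (X s)" by (simp add: X_def)
    have bhi: "hi (X s) \<le> b" unfolding b_def X_def by (rule hi_traj_mono[OF al]) simp
    have yb: "y \<le> b" using ab c by (simp add: y_def)
    have ne: "{i. X s $ i \<le> y} \<noteq> {}"
    proof
      assume "{i. X s $ i \<le> y} = {}"
      then show False using Suc.IH min_pos[OF N0, of s] by (simp add: y_def)
    qed
    have "min CARD('n) (card {i. X s $ i \<le> y} + 1) \<le> card {i. X (Suc s) $ i \<le> b - c*(b-y)}"
      unfolding XS using step_down[OF tb mu1, of \<alpha> "k0+(p+s)" c "X s" b y] al c bhi yb ne by auto
    moreover have "b - c*(b-y) = b - c^(Suc s)*(b-a)" by (simp add: y_def)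
    ultimately show ?case using order_trans[OF min_step[OF Suc.IH[folded y_def]]] by simp
  qed
  have all: "{i. X CARD('n) $ i \<le> b - c^CARD('n)*(b-a)} = UNIV"
    by (rule card_full) (use claim[of "CARD('n)"] in simp)
  obtain j where j: "hi (X CARD('n)) = X CARD('n) $ j" using hi_in by blast
  have hi': "hi (X CARD('n)) \<le> b - c^CARD('n)*(b-a)" using all j by (metis UNIV_I mem_Collect_eq)
  have lo': "a \<le> lo (X CARD('n))" unfolding a_def X_def by (rule lo_traj_mono[OF al]) simp
  have "hi (X CARD('n)) - lo (X CARD('n)) \<le> (1 - c^CARD('n)) * (b - a)"
    using lo' hi' by (simp add: algebra_simps)
  then show ?thesis by (simp add: X_def a_def b_def)
qed

lemma part3:
  assumes al: "\<And>t. 0 < \<alpha> t \<and> \<alpha> t < 1" and mono: "mono \<alpha> \<or> antimono \<alpha>"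
  shows "asymptotic_consensus \<alpha> tb k0 x0"
proof -
  obtain c where c: "0 < c" "c \<le> 1" and contr: "\<And>p. hi (traj \<alpha> tb k0 x0 (p + CARD('n))) - lo (traj \<alpha> tb k0 x0 (p + CARD('n)))
         \<le> (1 - c ^ CARD('n)) * (hi (traj \<alpha> tb k0 x0 p) - lo (traj \<alpha> tb k0 x0 p))"
  proof (cases "mono \<alpha>")
    case True
    have "\<alpha> 0 \<le> \<alpha> t" for t using True by (simp add: mono_def)
    then show ?thesis using that[of "\<alpha> 0"] contract_down[OF al, of "\<alpha> 0"] al[of 0] by auto
  next
    case False
    then have am: "antimono \<alpha>" using mono by simp
    have "1 - \<alpha> 0 \<le> 1 - \<alpha> t" for t using am by (simp add: antimono_def)
    then show ?thesis using that[of "1 - \<alpha> 0"] contract_up[OF al, of "1 - \<alpha> 0"] al[of 0] by auto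
  qed
  have r: "0 \<le> 1 - c ^ CARD('n)" "1 - c ^ CARD('n) < 1"
    using c by (auto simp: power_le_one)
  have "\<exists>z. \<forall>i. (\<lambda>m. traj \<alpha> tb k0 x0 m $ i) \<longlonglongrightarrow> z"
  proof (rule abstract_conv[where L = "\<lambda>m. lo (traj \<alpha> tb k0 x0 m)" and H = "\<lambda>m. hi (traj \<alpha> tb k0 x0 m)", OF _ _ _ r])
    show "\<And>m. lo (traj \<alpha> tb k0 x0 m) \<le> lo (traj \<alpha> tb k0 x0 (Suc m))" by (rule lo_traj_mono[OF al]) simp
    show "\<And>m. hi (traj \<alpha> tb k0 x0 (Suc m)) \<le> hi (traj \<alpha> tb k0 x0 m)" by (rule hi_traj_mono[OF al]) simp
    show "\<And>m. lo (traj \<alpha> tb k0 x0 m) \<le> hi (traj \<alpha> tb k0 x0 m)" by (rule lo_hi)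
    show "0 < CARD('n)" by simp
    show "\<And>p. hi (traj \<alpha> tb k0 x0 (p + CARD('n))) - lo (traj \<alpha> tb k0 x0 (p + CARD('n)))
         \<le> (1 - c ^ CARD('n)) * (hi (traj \<alpha> tb k0 x0 p) - lo (traj \<alpha> tb k0 x0 p))" by (rule contr)
    show "\<And>i m. lo (traj \<alpha> tb k0 x0 m) \<le> traj \<alpha> tb k0 x0 m $ i \<and> traj \<alpha> tb k0 x0 m $ i \<le> hi (traj \<alpha> tb k0 x0 m)"
      using lo_le hi_ge by blast
  qed
  then show ?thesis by (simp add: asymptotic_consensus_def)
qed

end



lemma AE_pair:
  fixes i j :: "'n::finite" assumes ij: "i \<noteq> j"
  shows "AE x in lborel. (x::real^'n)$i \<noteq> x$j"
proof -
  define u :: "real^'n" where "u = axis i 1 - axis j 1"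
  have "u $ i = 1" using ij by (simp add: u_def axis_def)
  then have "u \<noteq> 0" by auto
  then have "negligible {x. u \<bullet> x = 0}" by (intro negligible_hyperplane) simp
  then have "{x. u \<bullet> x = 0} \<in> null_sets (completion lborel)" by (simp add: negligible_iff_null_sets)
  then obtain N where N: "N \<in> null_sets lborel" "{x. u \<bullet> x = 0} \<subseteq> N"
    unfolding null_sets_completion_iff2 by blast
  have ux: "u \<bullet> x = x$i - x$j" for x :: "real^'n"
    by (simp add: u_def inner_diff_left inner_axis')
  show ?thesis
    by (rule AE_I'[OF N(1)]) (use N(2) ux in auto)
qed

lemma AE_distinct: "AE x in lborel. \<forall>i j. i \<noteq> j \<longrightarrow> (x::real^'n::finite)$i \<noteq> x$j"
proof -
  have h: "AE x in lborel. fst p \<noteq> snd p \<longrightarrow> (x::real^'n)$(fst p) \<noteq> x$(snd p)" if "p \<in> UNIV" for p :: "'n \<times> 'n"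
  proof (cases "fst p = snd p")
    case True then show ?thesis by simp
  next
    case False then show ?thesis using AE_pair[OF False] by (auto elim: AE_mp)
  qed
  have "AE x in lborel. \<forall>p\<in>(UNIV::('n\<times>'n) set). fst p \<noteq> snd p \<longrightarrow> (x::real^'n)$(fst p) \<noteq> x$(snd p)"
    by (rule AE_finite_allI[OF _ h]) auto
  then show ?thesis by (rule AE_mp) auto
qed

context
  fixes mu :: nat and tb :: "nat \<Rightarrow> real^'n \<Rightarrow> 'n \<Rightarrow> 'n set \<times> 'n set"
  assumes tb: "valid_tiebreak mu tb" and mu1: "mu \<ge> 1"
begin

lemma small_mnv: assumes N: "CARD('n) \<le> mu + 1" shows "mnv tb k x i = lo x"
proof -
  obtain b where b: "lo x = x$b" using lo_in by blast
  have "mnv tb k x i \<le> lo x"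
  proof (cases "x$b = x$i")
    case True then show ?thesis using mnv_self[of tb k x i] b by simp
  next
    case False
    then have bl: "b \<in> lower_set x i" using lo_le[of x i] b by (auto simp: lower_set_def)
    have "lower_set x i \<subseteq> UNIV - {i}" by (auto simp: lower_set_def)
    then have "card (lower_set x i) \<le> card (UNIV - {i} :: 'n set)" by (intro card_mono) auto
    also have "\<dots> = CARD('n) - 1" by (simp add: card_Diff_subset)
    finally have "card (lower_set x i) \<le> mu" using N by linarith
    then have "card (fst (tb k x i)) = card (lower_set x i)" using card_fst[OF tb] by simp
    then have "fst (tb k x i) = lower_set x i" using fst_sub[OF tb] by (intro card_subset_eq) auto
    then have "b \<in> nbhd tb k x i" using bl by (simp add: nbhd_def)
    then show ?thesis using mnv_le b by metis
  qed
  then show ?thesis using lo_mnv[of x tb k i] by simp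
qed

lemma small_mxv: assumes N: "CARD('n) \<le> mu + 1" shows "mxv tb k x i = hi x"
proof -
  obtain b where b: "hi x = x$b" using hi_in by blast
  have "hi x \<le> mxv tb k x i"
  proof (cases "x$b = x$i")
    case True then show ?thesis using mxv_self[of x i tb k] b by simp
  next
    case False
    then have bl: "b \<in> upper_set x i" using hi_ge[of x i] b by (auto simp: upper_set_def)
    have "upper_set x i \<subseteq> UNIV - {i}" by (auto simp: upper_set_def)
    then have "card (upper_set x i) \<le> card (UNIV - {i} :: 'n set)" by (intro card_mono) auto
    also have "\<dots> = CARD('n) - 1" by (simp add: card_Diff_subset)
    finally have "card (upper_set x i) \<le> mu" using N by linarith
    then have "card (snd (tb k x i)) = card (upper_set x i)" using card_snd[OF tb] by simp
    then have "snd (tb k x i) = upper_set x i" using snd_sub[OF tb] by (intro card_subset_eq) auto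
    then have "b \<in> nbhd tb k x i" using bl by (simp add: nbhd_def)
    then show ?thesis using mxv_ge b by metis
  qed
  then show ?thesis using mxv_hi[of tb k x i] by simp
qed

lemma part1: assumes N: "CARD('n) \<le> mu + 1" shows "finite_time_consensus \<alpha> tb k0 x0"
proof -
  have "\<forall>i. traj \<alpha> tb k0 x0 1 $ i = \<alpha> k0 * lo x0 + (1 - \<alpha> k0) * hi x0"
    by (simp add: step_nth small_mnv[OF N] small_mxv[OF N])
  then show ?thesis unfolding finite_time_consensus_def by blast
qed

end



definition Jset :: "real^'n \<Rightarrow> 'n set" where
  "Jset x = {j. lo x < x$j \<and> x$j < hi x}"

context
  fixes mu :: nat and tb :: "nat \<Rightarrow> real^'n \<Rightarrow> 'n \<Rightarrow> 'n set \<times> 'n set"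
  assumes tb: "valid_tiebreak mu tb" and mu1: "mu \<ge> 1"
begin

lemma inv_step:
  fixes x :: "real^'n"
  assumes al: "0 < \<alpha> k" "\<alpha> k < 1" and Jc: "mu \<le> card (Jset x)"
  shows "mu \<le> card (Jset (step \<alpha> tb k x))"
proof -
  define a where "a = lo x"
  define b where "b = hi x"
  define J where "J = Jset x"
  define x' where "x' = step \<alpha> tb k x"
  have J_def': "J = {j. a < x$j \<and> x$j < b}" by (simp add: J_def Jset_def a_def b_def)
  have Jne: "J \<noteq> {}" using Jc mu1 J_def by auto
  then obtain j0 where j0: "j0 \<in> J" by auto
  have ab: "a < b" using j0 J_def' by auto
  obtain \<beta> where \<beta>: "x$\<beta> = a" using lo_in a_def by metis
  obtain \<tau> where \<tau>: "x$\<tau> = b" using hi_in b_def by metis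
  have geA: "a \<le> x$l" for l using lo_le a_def by metis
  have leB: "x$l \<le> b" for l using hi_ge b_def by metis
  define v where "v = mxv tb k x \<beta>"
  define w where "w = mnv tb k x \<tau>"
  have mn\<beta>: "mnv tb k x \<beta> = a" using lo_mnv[of x tb k \<beta>] mnv_self[of tb k x \<beta>] \<beta> a_def by simp
  have mx\<tau>: "mxv tb k x \<tau> = b" using mxv_hi[of tb k x \<tau>] mxv_self[of x \<tau> tb k] \<tau> b_def by simp
  have JU: "J \<subseteq> upper_set x \<beta>" using \<beta> by (auto simp: J_def' upper_set_def)
  have JL: "J \<subseteq> lower_set x \<tau>" using \<tau> by (auto simp: J_def' lower_set_def)
  have fst\<beta>: "fst (tb k x \<beta>) = {}"
  proof -
    have "l \<notin> fst (tb k x \<beta>)" for l using fst_lt[OF tb, of l k x \<beta>] geA[of l] \<beta> by auto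
    then show ?thesis by auto
  qed
  have snd\<tau>: "snd (tb k x \<tau>) = {}"
  proof -
    have "l \<notin> snd (tb k x \<tau>)" for l using snd_gt[OF tb, of l k x \<tau>] leB[of l] \<tau> by auto
    then show ?thesis by auto
  qed
  obtain s0 where s0n: "s0 \<in> nbhd tb k x \<beta>" and s0v: "v = x$s0" using mxv_in v_def by metis
  have "snd (tb k x \<beta>) \<noteq> {}" using snd_ne[OF tb mu1] JU Jne by blast
  then obtain s where s: "s \<in> snd (tb k x \<beta>)" by auto
  have av: "a < v" using snd_gt[OF tb s] mxv_ge[OF snd_nbhd[of s tb k x \<beta>, OF s]] \<beta> v_def by simp
  have s0: "s0 \<in> snd (tb k x \<beta>)"
    using s0n av s0v \<beta> fst\<beta> by (auto simp: nbhd_def)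
  define P where "P = {j. a < x$j \<and> x$j < v}"
  have cardsnd: "card (snd (tb k x \<beta>)) \<le> mu" using card_snd[OF tb] by simp
  have "P \<subseteq> snd (tb k x \<beta>) - {s0}"
  proof
    fix l assume l: "l \<in> P"
    then have lu: "l \<in> upper_set x \<beta>" using \<beta> by (auto simp: P_def upper_set_def)
    have "l \<in> snd (tb k x \<beta>)"
    proof (rule ccontr)
      assume "l \<notin> snd (tb k x \<beta>)"
      then have "x$s0 \<le> x$l" using close_snd[OF tb s0 lu] by simp
      then show False using l s0v by (auto simp: P_def)
    qed
    moreover have "l \<noteq> s0" using l s0v by (auto simp: P_def)
    ultimately show "l \<in> snd (tb k x \<beta>) - {s0}" by simp
  qed
  then have "card P \<le> card (snd (tb k x \<beta>) - {s0})" by (intro card_mono) auto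
  also have "\<dots> = card (snd (tb k x \<beta>)) - 1" using s0 by simp
  finally have cardP: "card P < mu" using cardsnd mu1 by linarith
  have vb: "v < b"
  proof (rule ccontr)
    assume "\<not> v < b"
    then have "J \<subseteq> P" by (auto simp: J_def' P_def)
    then have "card J \<le> card P" by (intro card_mono) auto
    then show False using cardP Jc unfolding J_def by linarith
  qed
  have aw: "a < w"
  proof (rule ccontr)
    assume "\<not> a < w"
    obtain t0 where t0n: "t0 \<in> nbhd tb k x \<tau>" and t0w: "w = x$t0" using mnv_in w_def by metis
    have xt0: "x$t0 = a" using \<open>\<not> a < w\<close> t0w geA[of t0] by simp
    have t0: "t0 \<in> fst (tb k x \<tau>)" using t0n xt0 \<tau> ab snd\<tau> by (auto simp: nbhd_def)
    have "J \<subseteq> fst (tb k x \<tau>)"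
    proof
      fix l assume l: "l \<in> J"
      show "l \<in> fst (tb k x \<tau>)"
      proof (rule ccontr)
        assume "l \<notin> fst (tb k x \<tau>)"
        then have "x$l \<le> x$t0" using close_fst[OF tb t0] JL l by blast
        then show False using l xt0 by (auto simp: J_def')
      qed
    qed
    then have "insert t0 J \<subseteq> fst (tb k x \<tau>)" using t0 by auto
    then have "card (insert t0 J) \<le> card (fst (tb k x \<tau>))" by (intro card_mono) auto
    moreover have "t0 \<notin> J" using xt0 by (auto simp: J_def')
    moreover have "card (fst (tb k x \<tau>)) \<le> mu" using card_fst[OF tb] by simp
    ultimately show False using Jc J_def by simp
  qed
  have x'\<beta>: "x'$\<beta> = \<alpha> k * a + (1 - \<alpha> k) * v" by (simp add: x'_def step_nth mn\<beta> v_def)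
  have x'\<tau>: "x'$\<tau> = \<alpha> k * w + (1 - \<alpha> k) * b" by (simp add: x'_def step_nth mx\<tau> w_def)
  define G where "G = {j\<in>J. card {l. x$j < x$l \<and> x$l \<le> v} < mu}"
  define H where "H = {j\<in>J. card {l. w \<le> x$l \<and> x$l < x$j} < mu}"
  have G1: "lo x' < x'$j" if j: "j \<in> G" for j
  proof -
    have jJ: "j \<in> J" using j by (simp add: G_def)
    have mxj: "v < mxv tb k x j"
    proof (rule ccontr)
      assume "\<not> v < mxv tb k x j"
      then have le: "mxv tb k x j \<le> v" by simp
      have \<tau>u: "\<tau> \<in> upper_set x j" using jJ \<tau> by (auto simp: J_def' upper_set_def)
      have ssub: "snd (tb k x j) \<subseteq> {l. x$j < x$l \<and> x$l \<le> v}"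
      proof
        fix l assume l: "l \<in> snd (tb k x j)"
        show "l \<in> {l. x$j < x$l \<and> x$l \<le> v}"
          using snd_gt[OF tb l] mxv_ge[OF snd_nbhd[of l tb k x j, OF l]] le by auto
      qed
      have "\<tau> \<notin> snd (tb k x j)" using ssub \<tau> vb by auto
      then have "snd (tb k x j) \<subset> upper_set x j" using snd_sub[OF tb] \<tau>u by blast
      then have "card (snd (tb k x j)) < card (upper_set x j)" by (intro psubset_card_mono) auto
      then have "card (snd (tb k x j)) = mu" using card_snd[OF tb, of k x j] by simp
      moreover have "card (snd (tb k x j)) \<le> card {l. x$j < x$l \<and> x$l \<le> v}" using ssub by (intro card_mono) auto
      ultimately show False using j by (simp add: G_def)
    qed
    have "x'$\<beta> < x'$j"
    proof -
      have "\<alpha> k * a \<le> \<alpha> k * mnv tb k x j" using al lo_mnv[of x tb k j] a_def by (intro mult_left_mono) auto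
      moreover have "(1 - \<alpha> k) * v < (1 - \<alpha> k) * mxv tb k x j" using al mxj by (intro mult_strict_left_mono) auto
      moreover have "x'$j = \<alpha> k * mnv tb k x j + (1 - \<alpha> k) * mxv tb k x j" by (simp add: x'_def step_nth)
      ultimately show ?thesis using x'\<beta> by linarith
    qed
    then show ?thesis using lo_le[of x' \<beta>] by linarith
  qed
  have H1: "x'$j < hi x'" if j: "j \<in> H" for j
  proof -
    have jJ: "j \<in> J" using j by (simp add: H_def)
    have mnj: "mnv tb k x j < w"
    proof (rule ccontr)
      assume "\<not> mnv tb k x j < w"
      then have le: "w \<le> mnv tb k x j" by simp
      have \<beta>l: "\<beta> \<in> lower_set x j" using jJ \<beta> by (auto simp: J_def' lower_set_def)
      have fsub: "fst (tb k x j) \<subseteq> {l. w \<le> x$l \<and> x$l < x$j}"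
      proof
        fix l assume l: "l \<in> fst (tb k x j)"
        show "l \<in> {l. w \<le> x$l \<and> x$l < x$j}"
          using fst_lt[OF tb l] mnv_le[OF fst_nbhd[of l tb k x j, OF l]] le by auto
      qed
      have "\<beta> \<notin> fst (tb k x j)" using fsub \<beta> aw by auto
      then have "fst (tb k x j) \<subset> lower_set x j" using fst_sub[OF tb] \<beta>l by blast
      then have "card (fst (tb k x j)) < card (lower_set x j)" by (intro psubset_card_mono) auto
      then have "card (fst (tb k x j)) = mu" using card_fst[OF tb, of k x j] by simp
      moreover have "card (fst (tb k x j)) \<le> card {l. w \<le> x$l \<and> x$l < x$j}" using fsub by (intro card_mono) auto
      ultimately show False using j by (simp add: H_def)
    qed
    have "x'$j < x'$\<tau>"
    proof -
      have "\<alpha> k * mnv tb k x j < \<alpha> k * w" using al mnj by (intro mult_strict_left_mono) auto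
      moreover have "(1 - \<alpha> k) * mxv tb k x j \<le> (1 - \<alpha> k) * b" using al mxv_hi[of tb k x j] b_def by (intro mult_left_mono) auto
      moreover have "x'$j = \<alpha> k * mnv tb k x j + (1 - \<alpha> k) * mxv tb k x j" by (simp add: x'_def step_nth)
      ultimately show ?thesis using x'\<tau> by linarith
    qed
    then show ?thesis using hi_ge[of x' \<tau>] by linarith
  qed
  have GH: "G \<inter> H \<subseteq> Jset x'" using G1 H1 by (auto simp: Jset_def)
  define Q where "Q = {l. a < x$l \<and> x$l \<le> v}"
  define V where "V = {l\<in>J. v < x$l}"
  have K1: "x$j < v" if "j \<in> J - G" for j
  proof -
    have "card {l. x$j < x$l \<and> x$l \<le> v} \<ge> mu" using that by (auto simp: G_def)
    then have "card {l. x$j < x$l \<and> x$l \<le> v} \<noteq> 0" using mu1 by linarith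
    then have "{l. x$j < x$l \<and> x$l \<le> v} \<noteq> {}" by (metis card.empty)
    then show ?thesis by auto
  qed
  have K2: "J - H \<subseteq> V"
  proof
    fix j assume j: "j \<in> J - H"
    have c: "card {l. w \<le> x$l \<and> x$l < x$j} \<ge> mu" using j by (auto simp: H_def)
    have "v < x$j"
    proof (rule ccontr)
      assume "\<not> v < x$j"
      then have "{l. w \<le> x$l \<and> x$l < x$j} \<subseteq> P" using aw by (auto simp: P_def)
      then have "card {l. w \<le> x$l \<and> x$l < x$j} \<le> card P" by (intro card_mono) auto
      then show False using c cardP by linarith
    qed
    then show "j \<in> V" using j by (simp add: V_def)
  qed
  have K3: "card (J - G) + mu \<le> card Q"
  proof (cases "J - G = {}")
    case True
    have "snd (tb k x \<beta>) \<subseteq> Q"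
    proof
      fix l assume l: "l \<in> snd (tb k x \<beta>)"
      show "l \<in> Q" using snd_gt[OF tb l] mxv_ge[OF snd_nbhd[of l tb k x \<beta>, OF l]] \<beta> v_def by (simp add: Q_def)
    qed
    then have "card (snd (tb k x \<beta>)) \<le> card Q" by (intro card_mono) auto
    moreover have "card J \<le> card (upper_set x \<beta>)" using JU by (intro card_mono) auto
    then have "card (snd (tb k x \<beta>)) = mu" using card_snd[OF tb, of k x \<beta>] Jc J_def by simp
    ultimately show ?thesis using True by (simp only: card.empty)
  next
    case False
    then have "Max ((\<lambda>j. x$j) ` (J - G)) \<in> (\<lambda>j. x$j) ` (J - G)" by (intro Max_in) auto
    then obtain js where js: "js \<in> J - G" "x$js = Max ((\<lambda>j. x$j) ` (J - G))" by auto
    have jsmax: "x$j \<le> x$js" if "j \<in> J - G" for j using js that by (auto intro: Max_ge)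
    define Q1 where "Q1 = {l. a < x$l \<and> x$l \<le> x$js}"
    define R where "R = {l. x$js < x$l \<and> x$l \<le> v}"
    have "J - G \<subseteq> Q1" using jsmax by (auto simp: Q1_def J_def')
    then have c1: "card (J - G) \<le> card Q1" by (intro card_mono) auto
    have c2: "mu \<le> card R" using js by (auto simp: G_def R_def)
    have "x$js < v" using K1 js by blast
    moreover have "a < x$js" using js by (auto simp: J_def')
    ultimately have "Q1 \<union> R \<subseteq> Q" by (auto simp: Q1_def R_def Q_def)
    then have "card (Q1 \<union> R) \<le> card Q" by (intro card_mono) auto
    moreover have "card (Q1 \<union> R) = card Q1 + card R" by (intro card_Un_disjoint) (auto simp: Q1_def R_def)
    ultimately show ?thesis using c1 c2 by linarith
  qed
  have K4: "card J = card Q + card V"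
  proof -
    have "J = Q \<union> V" using vb by (auto simp: J_def' Q_def V_def)
    moreover have "Q \<inter> V = {}" by (auto simp: Q_def V_def)
    ultimately show ?thesis by (simp add: card_Un_disjoint)
  qed
  have K5: "card J = card (J - G) + card (J - H) + card (G \<inter> H)"
  proof -
    have GJ: "G \<subseteq> J" "H \<subseteq> J" by (auto simp: G_def H_def)
    have d1: "(J - G) \<inter> (J - H) = {}" using K1 K2 by (force simp: V_def)
    have "J = ((J - G) \<union> (J - H)) \<union> (G \<inter> H)" using GJ by auto
    moreover have "((J - G) \<union> (J - H)) \<inter> (G \<inter> H) = {}" by auto
    ultimately have "card J = card ((J - G) \<union> (J - H)) + card (G \<inter> H)"
      by (metis card_Un_disjoint finite)
    also have "card ((J - G) \<union> (J - H)) = card (J - G) + card (J - H)"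
      using d1 by (intro card_Un_disjoint) auto
    finally show ?thesis .
  qed
  have "card (J - H) \<le> card V" using K2 by (intro card_mono) auto
  then have "mu \<le> card (G \<inter> H)" using K3 K4 K5 by linarith
  also have "\<dots> \<le> card (Jset x')" using GH by (intro card_mono) auto
  finally show ?thesis by (simp add: x'_def)
qed

lemma inv_traj:
  assumes al: "\<And>t. 0 < \<alpha> t \<and> \<alpha> t < 1" and J0: "mu \<le> card (Jset x0)"
  shows "mu \<le> card (Jset (traj \<alpha> tb k0 x0 m))"
proof (induction m)
  case 0 then show ?case using J0 by simp
next
  case (Suc m) then show ?case using inv_step[of \<alpha> "k0+m"] al by simp
qed

lemma part2_pt:
  assumes al: "\<And>t. 0 < \<alpha> t \<and> \<alpha> t < 1" and N: "CARD('n) > mu + 1"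
    and d: "\<forall>i j. i \<noteq> j \<longrightarrow> x0$i \<noteq> x0$j"
  shows "\<not> finite_time_consensus \<alpha> tb k0 x0"
proof
  obtain \<beta> where \<beta>: "lo x0 = x0$\<beta>" using lo_in by blast
  obtain \<tau> where \<tau>: "hi x0 = x0$\<tau>" using hi_in by blast
  have "UNIV - {\<beta>, \<tau>} \<subseteq> Jset x0"
  proof
    fix j assume j: "j \<in> UNIV - {\<beta>, \<tau>}"
    then have "x0$j \<noteq> lo x0" "x0$j \<noteq> hi x0" using d \<beta> \<tau> by auto
    then show "j \<in> Jset x0" using lo_le[of x0 j] hi_ge[of x0 j] by (auto simp: Jset_def)
  qed
  then have "card (UNIV - {\<beta>, \<tau>}) \<le> card (Jset x0)" by (intro card_mono) auto
  moreover have "card (UNIV - {\<beta>, \<tau>}) \<ge> CARD('n) - 2"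
  proof -
    have "card (UNIV - {\<beta>, \<tau>}) = CARD('n) - card {\<beta>, \<tau>}" by (simp add: card_Diff_subset)
    moreover have "card {\<beta>, \<tau>} \<le> 2" by (simp add: card_insert_le_m1)
    ultimately show ?thesis by linarith
  qed
  ultimately have J0: "mu \<le> card (Jset x0)" using N by linarith
  assume "finite_time_consensus \<alpha> tb k0 x0"
  then obtain m z where z: "\<forall>i. traj \<alpha> tb k0 x0 m $ i = z" by (auto simp: finite_time_consensus_def)
  have "Jset (traj \<alpha> tb k0 x0 m) = {}"
  proof -
    have "lo (traj \<alpha> tb k0 x0 m) = z" using lo_in[of "traj \<alpha> tb k0 x0 m"] z by metis
    then show ?thesis using z by (auto simp: Jset_def)
  qed
  moreover have "mu \<le> card (Jset (traj \<alpha> tb k0 x0 m'))" for m'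
  proof (induction m')
    case 0 then show ?case using J0 by simp
  next
    case (Suc m') then show ?case using inv_step[of \<alpha> "k0+m'"] al by simp
  qed
  ultimately show False using mu1 by (metis card.empty le_zero_eq not_one_le_zero)
qed

end


theorem theorem8:
  fixes \<alpha> :: "nat \<Rightarrow> real" and mu :: nat
    and tb :: "nat \<Rightarrow> real^'n \<Rightarrow> 'n \<Rightarrow> 'n set \<times> 'n set"
  assumes n3: "CARD('n) \<ge> 3"
    and mu_pos: "mu \<ge> 1"
    and alpha: "\<And>k. 0 < \<alpha> k \<and> \<alpha> k < 1"
    and tb: "valid_tiebreak mu tb"
  shows "(CARD('n) \<le> mu + 1 \<longrightarrow> (\<forall>k0 x0. finite_time_consensus \<alpha> tb k0 x0))
       \<and> (CARD('n) > mu + 1 \<longrightarrow>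
            (\<forall>k0. AE x0 in lborel. \<not> finite_time_consensus \<alpha> tb k0 x0))
       \<and> (CARD('n) > mu + 1 \<and> (mono \<alpha> \<or> antimono \<alpha>) \<longrightarrow>
            (\<forall>k0 x0. asymptotic_consensus \<alpha> tb k0 x0))"
proof (intro conjI impI allI)
  fix k0 x0 assume N: "CARD('n) \<le> mu + 1"
  show "finite_time_consensus \<alpha> tb k0 x0" by (rule part1[OF tb mu_pos N])
next
  fix k0 assume N: "CARD('n) > mu + 1"
  show "AE x0 in lborel. \<not> finite_time_consensus \<alpha> tb k0 x0"
    using AE_distinct
  proof (rule AE_mp)
    show "AE x in lborel. (\<forall>i j. i \<noteq> j \<longrightarrow> x $ i \<noteq> x $ j) \<longrightarrow> \<not> finite_time_consensus \<alpha> tb k0 x"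
      by (intro AE_I2 impI part2_pt[OF tb mu_pos alpha N]) auto
  qed
next
  fix k0 x0 assume h: "CARD('n) > mu + 1 \<and> (mono \<alpha> \<or> antimono \<alpha>)"
  show "asymptotic_consensus \<alpha> tb k0 x0" by (rule part3[OF tb mu_pos alpha]) (use h in blast)
qed

end
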